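(* Let $\mathcal{A}_1,\mathcal{A}_2$ be cyclic finite automata each with at most $m$ states, let $d$ be a multiple of $(m^2)!$, and let $v\in(\Sigma^d)^*$. If $\downarrow_{\preceq_d}v^*\in\mathrm{Adh}_{\preceq_d}(L(\mathcal{A}_i))$ for $i=1,2$, then there is $w\in(\Sigma^d)^*$ such that (i) $\downarrow_{\preceq_d}v^*\subseteq\downarrow_{\preceq_d}w^*$, (ii) $\downarrow_{\preceq_d}w^*\in\mathrm{Adh}_{\preceq_d}(L(\mathcal{A}_i))$ for $i=1,2$, and (iii) $\pi_d(w)\le m^2$.
   Context: A finite automaton is cyclic if it has exactly one initial state and its set of final states equals its set of initial states. $u\preceq_d v$ iff $u=u_0\cdots u_n$ and $v=u_0v_1u_1\cdots v_nu_n$ with every $|v_i|$ divisible by $d$. An ideal is a nonempty, downward closed, directed set; $\mathrm{Adh}_{\preceq_d}(L)$ is the set of $\preceq_d$-ideals $I$ with $I\subseteq\downarrow_{\preceq_d}(L\cap I)$. For $w\in\Sigma^*$ and $i\in[1,d]$, $\kappa_d(w)(i)$ is the set of letters occurring in $w$ at a position $p\equiv i\pmod d$ (positions from $1$). $\pi_d(w)$ is the smallest $t\in[1,d]$ dividing $d$ such that $\kappa_d(w)(i+t)=\kappa_d(w)(i)$ for all $i\in[1,d-t]$. *)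

theory Defs
  imports Main
begin

record ('q, 'a) nfa =
  states :: "'q set"
  init   :: "'q set"
  final  :: "'q set"
  trans  :: "('q \<times> 'a \<times> 'q) set"

definition wf_nfa :: "('q, 'a) nfa \<Rightarrow> bool" where
  "wf_nfa A \<longleftrightarrow> finite (states A) \<and> init A \<subseteq> states A \<and> final A \<subseteq> states A
     \<and> (\<forall>(p, a, q) \<in> trans A. p \<in> states A \<and> q \<in> states A)"

fun run :: "('q, 'a) nfa \<Rightarrow> 'q \<Rightarrow> 'a list \<Rightarrow> 'q \<Rightarrow> bool" where
  "run A p [] q \<longleftrightarrow> p = q"
| "run A p (a # w) q \<longleftrightarrow> (\<exists>p'. (p, a, p') \<in> trans A \<and> run A p' w q)"

definition lang :: "('q, 'a) nfa \<Rightarrow> 'a list set" where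
  "lang A = {w. \<exists>p \<in> init A. \<exists>q \<in> final A. run A p w q}"

definition cyclic :: "('q, 'a) nfa \<Rightarrow> bool" where
  "cyclic A \<longleftrightarrow> card (init A) = 1 \<and> final A = init A"

text \<open>u \<preceq>_d v iff u = u0...un and v = u0 v1 u1 ... vn un with d dividing every |vi|.\<close>
definition subword_d :: "nat \<Rightarrow> 'a list \<Rightarrow> 'a list \<Rightarrow> bool" where
  "subword_d d u v \<longleftrightarrow> (\<exists>us vs. length us = length vs + 1 \<and> u = concat us \<and>
      v = hd us @ concat (map (\<lambda>(vi, ui). vi @ ui) (zip vs (tl us))) \<and>
      (\<forall>x \<in> set vs. d dvd length x))"

definition down_d :: "nat \<Rightarrow> 'a list set \<Rightarrow> 'a list set" where
  "down_d d L = {u. \<exists>v \<in> L. subword_d d u v}"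

definition ideal_d :: "nat \<Rightarrow> 'a list set \<Rightarrow> bool" where
  "ideal_d d I \<longleftrightarrow> I \<noteq> {} \<and> (\<forall>u v. v \<in> I \<longrightarrow> subword_d d u v \<longrightarrow> u \<in> I)
     \<and> (\<forall>x \<in> I. \<forall>y \<in> I. \<exists>z \<in> I. subword_d d x z \<and> subword_d d y z)"

definition Adh_d :: "nat \<Rightarrow> 'a list set \<Rightarrow> 'a list set set" where
  "Adh_d d L = {I. ideal_d d I \<and> I \<subseteq> down_d d (L \<inter> I)}"

definition star_word :: "'a list \<Rightarrow> 'a list set" where
  "star_word v = {concat (replicate n v) | n. True}"

text \<open>kappa d w i: letters of w at positions p \<equiv> i (mod d), positions counted from 1.\<close>
definition kappa_d :: "nat \<Rightarrow> 'a list \<Rightarrow> nat \<Rightarrow> 'a set" where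
  "kappa_d d w i = {w ! (p - 1) | p. 1 \<le> p \<and> p \<le> length w \<and> p mod d = i mod d}"

definition pi_d :: "nat \<Rightarrow> 'a list \<Rightarrow> nat" where
  "pi_d d w = (LEAST t. 1 \<le> t \<and> t \<le> d \<and> t dvd d \<and>
      (\<forall>i \<in> {1..d - t}. kappa_d d w (i + t) = kappa_d d w i))"

end

theory Submission
  imports Defs
begin


inductive emb :: "nat \<Rightarrow> 'a list \<Rightarrow> 'a list \<Rightarrow> bool" for d where
  emb_Nil: "emb d [] []"
| emb_Cons: "emb d u v \<Longrightarrow> emb d (a#u) (a#v)"
| emb_del: "d dvd length y \<Longrightarrow> emb d u v \<Longrightarrow> emb d u (y @ v)"

lemma emb_prefix: "emb d u v \<Longrightarrow> emb d (w @ u) (w @ v)"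
  by (induction w) (auto intro: emb_Cons)

lemma emb_concat: "length us = length vs \<Longrightarrow> \<forall>x\<in>set vs. d dvd length x \<Longrightarrow>
  emb d (concat us) (concat (map (\<lambda>(vi, ui). vi @ ui) (zip vs us)))"
proof (induction us vs rule: list_induct2)
  case Nil then show ?case by (simp add: emb_Nil)
next
  case (Cons u us y vs)
  then have "emb d (u @ concat us) (u @ concat (map (\<lambda>(vi, ui). vi @ ui) (zip vs us)))"
    by (intro emb_prefix) auto
  then have "emb d (u @ concat us) (y @ (u @ concat (map (\<lambda>(vi, ui). vi @ ui) (zip vs us))))"
    by (rule emb_del[rotated]) (use Cons in auto)
  then show ?case by simp
qed

lemma subword_emb: "subword_d d u v \<longleftrightarrow> emb d u v"
proof
  assume "subword_d d u v"
  then obtain us vs where h: "length us = length vs + 1" "u = concat us"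
    "v = hd us @ concat (map (\<lambda>(vi, ui). vi @ ui) (zip vs (tl us)))"
    "\<forall>x \<in> set vs. d dvd length x" unfolding subword_d_def by blast
  then obtain u0 us' where us: "us = u0 # us'" by (cases us) auto
  have "emb d (u0 @ concat us') (u0 @ concat (map (\<lambda>(vi, ui). vi @ ui) (zip vs us')))"
    using h us by (intro emb_prefix emb_concat) auto
  then show "emb d u v" using h us by simp
next
  assume "emb d u v"
  then show "subword_d d u v"
  proof (induction rule: emb.induct)
    case emb_Nil
    then show ?case unfolding subword_d_def by (intro exI[of _ "[[]]"] exI[of _ "[]"]) auto
  next
    case (emb_Cons u v a)
    then obtain us vs where h: "length us = length vs + 1" "u = concat us"
      "v = hd us @ concat (map (\<lambda>(vi, ui). vi @ ui) (zip vs (tl us)))"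
      "\<forall>x \<in> set vs. d dvd length x" unfolding subword_d_def by blast
    then obtain u0 us' where us: "us = u0 # us'" by (cases us) auto
    show ?case unfolding subword_d_def
      by (intro exI[of _ "(a#u0)#us'"] exI[of _ vs]) (use h us in auto)
  next
    case (emb_del y u v)
    then obtain us vs where h: "length us = length vs + 1" "u = concat us"
      "v = hd us @ concat (map (\<lambda>(vi, ui). vi @ ui) (zip vs (tl us)))"
      "\<forall>x \<in> set vs. d dvd length x" unfolding subword_d_def by blast
    then obtain u0 us' where us: "us = u0 # us'" by (cases us) auto
    show ?case unfolding subword_d_def
      by (intro exI[of _ "[]#u0#us'"] exI[of _ "y#vs"]) (use h us emb_del in auto)
  qed
qed

lemma emb_refl: "emb d u u"
  by (induction u) (auto intro: emb_Nil emb_Cons)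

lemma emb_append_right: "emb d u v \<Longrightarrow> d dvd length y \<Longrightarrow> emb d u (v @ y)"
proof (induction rule: emb.induct)
  case emb_Nil
  then show ?case using emb.emb_del[OF _ emb.emb_Nil, where y=y] by simp
next
  case (emb_Cons u v a) then show ?case by (simp add: emb.emb_Cons)
next
  case (emb_del y' u v)
  then have "emb d u (y' @ (v @ y))" using emb.emb_del[of d y' u "v@y"] by auto
  then show ?case by simp
qed

lemma mod_dvd_add: "d dvd a \<Longrightarrow> (a + q) mod d = q mod (d::nat)"
  by (auto elim!: dvdE)

lemma emb_props: "emb d u v \<Longrightarrow> length u \<le> length v \<and> length v mod d = length u mod d \<and>
   (\<forall>p<length u. \<exists>q<length v. v!q = u!p \<and> q mod d = p mod d)"
proof (induction rule: emb.induct)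
  case emb_Nil then show ?case by simp
next
  case (emb_Cons u v a)
  have "\<exists>q<length (a#v). (a#v)!q = (a#u)!p \<and> q mod d = p mod d" if "p < length (a#u)" for p
  proof (cases p)
    case 0 then show ?thesis by auto
  next
    case (Suc p')
    with that emb_Cons obtain q where "q<length v" "v!q = u!p'" "q mod d = p' mod d" by auto
    then show ?thesis using Suc by (intro exI[of _ "Suc q"]) (auto, metis mod_Suc_eq)
  qed
  moreover have "length v mod d = length u mod d" using emb_Cons by blast
  then have "Suc (length v) mod d = Suc (length u) mod d" by (metis mod_Suc_eq)
  moreover have "length u \<le> length v" using emb_Cons by blast
  ultimately show ?case by simp
next
  case (emb_del y u v)
  have "\<exists>q<length (y@v). (y@v)!q = u!p \<and> q mod d = p mod d" if "p < length u" for p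
  proof -
    from that emb_del obtain q where "q<length v" "v!q = u!p" "q mod d = p mod d" by auto
    then show ?thesis using emb_del(1)
      by (intro exI[of _ "length y + q"]) (auto simp: nth_append mod_dvd_add)
  qed
  then show ?case using emb_del by (auto simp: mod_dvd_add)
qed




definition Kset :: "nat \<Rightarrow> 'a list \<Rightarrow> nat \<Rightarrow> 'a set" where
  "Kset d w r = {w!p | p. p < length w \<and> p mod d = r}"

definition compat :: "nat \<Rightarrow> (nat \<Rightarrow> 'a set) \<Rightarrow> nat \<Rightarrow> 'a list \<Rightarrow> bool" where
  "compat d S s u \<longleftrightarrow> (\<forall>p<length u. u!p \<in> S ((s+p) mod d))"

lemma nth_concat_replicate: "q < n * length w \<Longrightarrow> concat (replicate n w) ! q = w ! (q mod length w)"
proof (induction n arbitrary: q)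
  case 0 then show ?case by simp
next
  case (Suc n)
  show ?case
  proof (cases "q < length w")
    case True then show ?thesis by (simp add: nth_append)
  next
    case False
    then have "q - length w < n * length w" using Suc by auto
    with Suc.IH have "concat (replicate n w) ! (q - length w) = w ! ((q - length w) mod length w)" by blast
    then show ?thesis using False by (simp add: nth_append le_mod_geq)
  qed
qed

lemma Suc_mod_cancel: "Suc a mod d = Suc b mod d \<Longrightarrow> a mod d = b mod (d::nat)"
  by (metis Zero_not_Suc mod_Suc nat.inject)

lemma mono_growth: "(\<forall>p q. p<q \<longrightarrow> q<n \<longrightarrow> (g::nat\<Rightarrow>nat) p < g q) \<Longrightarrow> i \<le> j \<Longrightarrow> j < n \<Longrightarrow> g i + (j - i) \<le> g j"
proof (induction j)
  case 0 then show ?case by simp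
next
  case (Suc j)
  show ?case
  proof (cases "i = Suc j")
    case True then show ?thesis by simp
  next
    case False
    then have "g i + (j - i) \<le> g j" using Suc by auto
    moreover have "g j < g (Suc j)" using Suc by auto
    ultimately show ?thesis using False Suc by linarith
  qed
qed

lemma emb_of_fun:
  assumes "\<forall>p<length u. g p < length v \<and> v ! g p = u ! p \<and> g p mod d = p mod d"
    and "\<forall>p q. p < q \<longrightarrow> q < length u \<longrightarrow> g p < g q"
    and "length v mod d = length u mod d" and "length u \<le> length v"
  shows "emb d u v"
  using assms
proof (induction u arbitrary: v g)
  case Nil
  then have "d dvd length v" by (simp add: mod_0_imp_dvd)
  then have "emb d [] (v @ [])" by (intro emb_del emb_Nil)
  then show ?case by simp
next
  case (Cons a u)
  define q0 where "q0 = g 0"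
  have q0: "q0 < length v" "v ! q0 = a" "q0 mod d = 0" using Cons.prems(1) unfolding q0_def by auto
  have growth: "g 0 + p \<le> g p" if "p < length (a#u)" for p
    using mono_growth[OF Cons.prems(2), of 0 p] that by simp
  define g' where "g' p = g (Suc p) - Suc q0" for p
  define v' where "v' = drop (Suc q0) v"
  have gS: "g (Suc p) = Suc q0 + g' p" if "p < length u" for p
    using growth[of "Suc p"] that unfolding g'_def q0_def by auto
  have "emb d u v'"
  proof (rule Cons.IH[of g'])
    show "\<forall>p<length u. g' p < length v' \<and> v' ! g' p = u ! p \<and> g' p mod d = p mod d"
    proof (intro allI impI conjI)
      fix p assume p: "p < length u"
      have 1: "g (Suc p) < length v" "v ! g (Suc p) = u ! p" "g (Suc p) mod d = Suc p mod d"
        using Cons.prems(1) p by auto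
      show "g' p < length v'" using 1 gS[OF p] unfolding v'_def by auto
      show "v' ! g' p = u ! p" using 1 gS[OF p] q0 unfolding v'_def by auto
      have dq: "d dvd q0" using q0(3) by (simp add: mod_0_imp_dvd)
      have e1: "(q0 + Suc (g' p)) mod d = Suc (g' p) mod d" by (rule mod_dvd_add[OF dq])
      have e2: "q0 + Suc (g' p) = g (Suc p)" using gS[OF p] by simp
      have "Suc (g' p) mod d = Suc p mod d" by (metis e1 e2 1(3))
      then show "g' p mod d = p mod d" by (rule Suc_mod_cancel)
    qed
    show "\<forall>p q. p < q \<longrightarrow> q < length u \<longrightarrow> g' p < g' q"
    proof (intro allI impI)
      fix p q assume pq: "p < q" "q < length u"
      then have "g (Suc p) < g (Suc q)" using Cons.prems(2) by simp
      then show "g' p < g' q" using gS[of p] gS[of q] pq by simp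
    qed
    have lv: "length v = Suc q0 + length v'" using q0 unfolding v'_def by auto
    have dq: "d dvd q0" using q0(3) by (simp add: mod_0_imp_dvd)
    have e1: "(q0 + Suc (length v')) mod d = Suc (length v') mod d" by (rule mod_dvd_add[OF dq])
    have e2: "q0 + Suc (length v') = length v" using lv by simp
    have "Suc (length v') mod d = Suc (length u) mod d" using Cons.prems(3) by (metis e1 e2 length_Cons)
    then show "length v' mod d = length u mod d" by (rule Suc_mod_cancel)
    have "g 0 + length u \<le> g (length u)" using growth[of "length u"] by simp
    moreover have "g (length u) < length v" using Cons.prems(1) by auto
    ultimately show "length u \<le> length v'" using lv unfolding q0_def by linarith
  qed
  then have "emb d (a#u) (a # v')" by (rule emb_Cons)
  then have "emb d (a#u) (take q0 v @ (a # v'))" using q0 by (intro emb_del) (auto simp: mod_0_imp_dvd min_def)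
  moreover have "take q0 v @ (a # v') = v" unfolding v'_def using q0 id_take_nth_drop[of q0 v] by simp
  ultimately show ?case by simp
qed

lemma downA1:
  assumes "d dvd length w" "u \<in> down_d d (star_word w)"
  shows "d dvd length u \<and> compat d (Kset d w) 0 u"
proof -
  obtain n where e: "emb d u (concat (replicate n w))"
    using assms(2) unfolding down_d_def star_word_def subword_emb by auto
  note P = emb_props[OF e]
  have "d dvd length u" using P assms(1) by (simp add: mod_0_imp_dvd dvd_imp_mod_0 length_concat sum_list_replicate)
  moreover have "compat d (Kset d w) 0 u" unfolding compat_def
  proof (intro allI impI)
    fix p assume p: "p < length u"
    then obtain q where q: "q < length (concat (replicate n w))" "concat (replicate n w) ! q = u!p" "q mod d = p mod d"
      using P by blast
    have lq: "q < n * length w" using q(1) by (simp add: length_concat sum_list_replicate)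
    then have "length w > 0" by (cases "length w") auto
    then have "q mod length w < length w" by simp
    moreover have "(q mod length w) mod d = q mod d" using assms(1) by (simp add: mod_mod_cancel)
    ultimately show "u!p \<in> Kset d w ((0 + p) mod d)"
      unfolding Kset_def using q nth_concat_replicate[OF lq] by force
  qed
  ultimately show ?thesis by blast
qed

lemma downA2:
  assumes "0 < d" "d dvd length w" "d dvd length u" "compat d (Kset d w) 0 u"
  shows "u \<in> down_d d (star_word w)"
proof (cases "u = []")
  case True
  then show ?thesis unfolding down_d_def star_word_def subword_emb
    by (auto intro!: exI[of _ 0] emb_Nil)
next
  case False
  have "\<forall>p<length u. \<exists>q. q < length w \<and> w!q = u!p \<and> q mod d = p mod d"
    using assms(4) unfolding compat_def Kset_def by fastforce
  then obtain h where h: "\<forall>p<length u. h p < length w \<and> w!(h p) = u!p \<and> h p mod d = p mod d"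
    by metis
  then have wpos: "length w > 0" using False by force
  define g where "g p = p * length w + h p" for p
  define V where "V = concat (replicate (length u) w)"
  have lV: "length V = length u * length w" unfolding V_def by (simp add: length_concat sum_list_replicate)
  have "emb d u V"
  proof (rule emb_of_fun[of u g])
    show "\<forall>p<length u. g p < length V \<and> V ! g p = u ! p \<and> g p mod d = p mod d"
    proof (intro allI impI conjI)
      fix p assume p: "p < length u"
      have "Suc p * length w \<le> length u * length w" using p by (intro mult_le_mono1) simp
      then show gl: "g p < length V" using h p lV unfolding g_def by auto
      show "V ! g p = u ! p" using nth_concat_replicate[of "g p" "length u" w] gl lV h p
        unfolding V_def g_def by simp
      have "d dvd p * length w" using assms(2) by simp
      from mod_dvd_add[OF this, of "h p"]
      show "g p mod d = p mod d" using h p unfolding g_def by simp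
    qed
    show "\<forall>p q. p < q \<longrightarrow> q < length u \<longrightarrow> g p < g q"
    proof (intro allI impI)
      fix p q assume "p < q" "q < length u"
      then have "Suc p * length w \<le> q * length w" by (intro mult_le_mono1) simp
      moreover have "h p < length w" using h \<open>p<q\<close> \<open>q < length u\<close> by auto
      ultimately have "p * length w + h p < Suc p * length w" by simp
      also have "\<dots> \<le> q * length w" by fact
      finally show "g p < g q" unfolding g_def by linarith
    qed
    show "length V mod d = length u mod d" using lV assms by (simp add: dvd_imp_mod_0)
    show "length u \<le> length V" using lV wpos by (simp add: Suc_leI)
  qed
  then show ?thesis unfolding down_d_def star_word_def subword_emb V_def by blast
qed




lemma run_append: "run A p (a@b) q \<longleftrightarrow> (\<exists>r. run A p a r \<and> run A r b q)"
  by (induction a arbitrary: p) auto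

lemma run_rep: "run A p x p \<Longrightarrow> run A p (concat (replicate c x)) p"
  by (induction c) (auto simp: run_append)

lemma run_concat: "\<forall>x\<in>set xs. run A p x p \<Longrightarrow> run A p (concat xs) p"
  by (induction xs) (auto simp: run_append)

lemma run_fun: "run A p w q \<Longrightarrow> \<exists>f. f 0 = p \<and> f (length w) = q \<and> (\<forall>k<length w. (f k, w!k, f (Suc k)) \<in> trans A)"
proof (induction w arbitrary: p)
  case Nil then show ?case by (intro exI[of _ "\<lambda>_. p"]) auto
next
  case (Cons a w)
  then obtain p' where p': "(p, a, p') \<in> trans A" "run A p' w q" by auto
  then obtain f where f: "f 0 = p'" "f (length w) = q" "\<forall>k<length w. (f k, w!k, f (Suc k)) \<in> trans A"
    using Cons.IH by blast
  define g where "g k = (case k of 0 \<Rightarrow> p | Suc k' \<Rightarrow> f k')" for k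
  have "\<forall>k<length (a#w). (g k, (a#w)!k, g (Suc k)) \<in> trans A"
  proof (intro allI impI)
    fix k assume "k < length (a#w)"
    then show "(g k, (a#w)!k, g (Suc k)) \<in> trans A" using f p' by (cases k) (auto simp: g_def)
  qed
  then show ?case using f by (intro exI[of _ g]) (auto simp: g_def)
qed

lemma fun_run: "\<forall>k<length w. (f (i+k), w!k, f (Suc (i+k))) \<in> trans A \<Longrightarrow> run A (f i) w (f (i + length w))"
proof (induction w arbitrary: i)
  case Nil then show ?case by simp
next
  case (Cons a w)
  have "run A (f (Suc i)) w (f (Suc i + length w))"
  proof (rule Cons.IH, intro allI impI)
    fix k assume "k < length w"
    then have "(f (i + Suc k), (a#w)!(Suc k), f (Suc (i + Suc k))) \<in> trans A" using Cons.prems by auto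
    then show "(f (Suc i + k), w ! k, f (Suc (Suc i + k))) \<in> trans A" by simp
  qed
  moreover have "(f i, a, f (Suc i)) \<in> trans A" using Cons.prems by (metis add_0_right length_Cons nth_Cons_0 zero_less_Suc)
  ultimately show ?case by auto
qed

lemma cyclic_lang:
  assumes "cyclic A"
  obtains q0 where "init A = {q0}" "final A = {q0}" "lang A = {w. run A q0 w q0}"
proof -
  from assms obtain q0 where "init A = {q0}" unfolding cyclic_def by (metis card_1_singletonE)
  moreover then have "final A = {q0}" using assms unfolding cyclic_def by simp
  ultimately show ?thesis using that unfolding lang_def by auto
qed

lemma fun_states:
  assumes "wf_nfa A" "p \<in> states A" "\<forall>k<n. (f k, w!k, f (Suc k)) \<in> trans A" "f 0 = p" "k \<le> n"
  shows "f k \<in> states A"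
proof (cases k)
  case 0 then show ?thesis using assms by simp
next
  case (Suc k')
  then have "(f k', w!k', f k) \<in> trans A" using assms by auto
  then show ?thesis using assms(1) unfolding wf_nfa_def by auto
qed

lemma pigeon:
  assumes "finite S1" "finite S2" "card S1 \<le> m" "card S2 \<le> m"
    and "\<forall>k\<le>m^2. f1 k \<in> S1 \<and> f2 k \<in> S2"
  shows "\<exists>i j. i < j \<and> j \<le> m^2 \<and> f1 i = f1 j \<and> f2 i = f2 j"
proof -
  let ?F = "\<lambda>k. (f1 k, f2 k)"
  have sub: "?F ` {0..m^2} \<subseteq> S1 \<times> S2" using assms(5) by auto
  have "card (S1 \<times> S2) \<le> m * m" using assms by (simp add: card_cartesian_product mult_le_mono)
  then have "card (?F ` {0..m^2}) \<le> m^2"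
    using card_mono[OF _ sub] assms(1,2) by (simp add: power2_eq_square)
  then have "\<not> inj_on ?F {0..m^2}" using card_image[of ?F "{0..m^2}"] by auto
  then obtain i j where ij: "i \<le> m^2" "j \<le> m^2" "i \<noteq> j" "?F i = ?F j"
    unfolding inj_on_def by auto
  show ?thesis
  proof (cases "i < j")
    case True then show ?thesis using ij by auto
  next
    case False then show ?thesis using ij by (intro exI[of _ j] exI[of _ i]) auto
  qed
qed




definition Tset :: "nat \<Rightarrow> nat \<Rightarrow> 'a list \<Rightarrow> nat \<Rightarrow> 'a set" where
  "Tset d e x r = {x!q | q c. q < length x \<and> (q + c*e) mod d = r mod d}"

lemma compat_append: "compat d S s (u@v) \<longleftrightarrow> compat d S s u \<and> compat d S (s + length u) v"
  unfolding compat_def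
proof safe
  fix p assume "\<forall>p<length (u @ v). (u @ v) ! p \<in> S ((s + p) mod d)" "p < length u"
  then show "u ! p \<in> S ((s + p) mod d)" by (metis length_append nth_append trans_less_add1)
next
  fix p assume a: "\<forall>p<length (u @ v). (u @ v) ! p \<in> S ((s + p) mod d)" "p < length v"
  then have "length u + p < length (u@v)" by simp
  then have "(u@v) ! (length u + p) \<in> S ((s + (length u + p)) mod d)" using a(1) by blast
  then show "v ! p \<in> S ((s + length u + p) mod d)" by (simp add: add.assoc)
next
  fix p assume "\<forall>p<length u. u ! p \<in> S ((s + p) mod d)" "\<forall>p<length v. v ! p \<in> S ((s + length u + p) mod d)"
    "p < length (u @ v)"
  then show "(u @ v) ! p \<in> S ((s + p) mod d)"
    by (cases "p < length u") (auto simp: nth_append, metis add.assoc le_add_diff_inverse not_less add_less_cancel_left)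
qed

lemma compat_cong: "s mod d = s' mod d \<Longrightarrow> compat d S s u = compat d S s' u"
  unfolding compat_def by (metis mod_add_left_eq)

lemma compat_concat: "\<forall>q\<in>set qs. compat d S 0 q \<and> d dvd length q \<Longrightarrow> compat d S 0 (concat qs)"
proof (induction qs)
  case Nil then show ?case by (simp add: compat_def)
next
  case (Cons q qs)
  moreover have "length q mod d = 0 mod d" using Cons by (simp add: dvd_imp_mod_0)
  ultimately have "compat d S (0 + length q) (concat qs)"
    using compat_cong[of "length q" d 0 S "concat qs"] by simp
  then show ?case using Cons by (simp add: compat_append)
qed

lemma Kset_concat: "q \<in> set qs \<Longrightarrow> \<forall>q\<in>set qs. d dvd length q \<Longrightarrow> a \<in> Kset d q r \<Longrightarrow> a \<in> Kset d (concat qs) r"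
proof (induction qs)
  case Nil then show ?case by simp
next
  case (Cons q' qs)
  show ?case
  proof (cases "q = q'")
    case True
    then obtain p where "p < length q" "q!p = a" "p mod d = r" using Cons unfolding Kset_def by auto
    then show ?thesis using True unfolding Kset_def by (auto simp: nth_append intro!: exI[of _ p])
  next
    case False
    then have "a \<in> Kset d (concat qs) r" using Cons by auto
    then obtain p where p: "p < length (concat qs)" "concat qs!p = a" "p mod d = r" unfolding Kset_def by auto
    have "d dvd length q'" using Cons by auto
    then have "(length q' + p) mod d = r" using p mod_dvd_add by auto
    then show ?thesis using p unfolding Kset_def by (auto simp: nth_append intro!: exI[of _ "length q' + p"])
  qed
qed

lemma Tset_shift: "0 < d \<Longrightarrow> Tset d e x (r + e) = Tset d e x r"
proof -
  assume d: "0 < d"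
  have 1: "(q + c*e) mod d = (r + e) mod d \<Longrightarrow> (q + (c + (d - 1))*e) mod d = r mod d" for q c
  proof -
    assume h: "(q + c*e) mod d = (r + e) mod d"
    have "(q + (c + (d - 1))*e) = (q + c*e) + (d-1)*e" by (simp add: algebra_simps)
    then have "(q + (c + (d - 1))*e) mod d = ((r + e) + (d-1)*e) mod d" using h by (metis mod_add_left_eq)
    also have "(r + e) + (d-1)*e = r + d*e" using d by (cases d) (auto simp: algebra_simps)
    finally show ?thesis by simp
  qed
  have 2: "(q + c*e) mod d = r mod d \<Longrightarrow> (q + (Suc c)*e) mod d = (r + e) mod d" for q c
    by (metis add.assoc add.commute mod_add_left_eq mult_Suc)
  show ?thesis unfolding Tset_def using 1 2 by blast
qed

lemma Tset_mod: "Tset d e x (r mod d) = Tset d e x r"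
  unfolding Tset_def by simp




lemma concat_dvd: "\<forall>q\<in>set qs. d dvd length q \<Longrightarrow> d dvd length (concat qs)"
  by (induction qs) auto

lemma seg_compat:
  assumes "a + len \<le> length x" "s mod d = (a + c*e) mod d"
  shows "compat d (Tset d e x) s (take len (drop a x))"
  unfolding compat_def
proof (intro allI impI)
  fix p assume p: "p < length (take len (drop a x))"
  then have p': "p < len" "a + p < length x" using assms by auto
  have "(a + p + c*e) mod d = (s + p) mod d"
    using assms(2) by (metis add.commute add.left_commute mod_add_right_eq)
  then have "x!(a+p) \<in> Tset d e x ((s + p) mod d)" unfolding Tset_def using p' by auto
  then show "take len (drop a x) ! p \<in> Tset d e x ((s + p) mod d)" using p' by simp
qed

lemma rep_compat:
  assumes "\<forall>s. (\<exists>c. s mod d = (i + c*e) mod d) \<longrightarrow> compat d S s b" "length b = e"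
    "s mod d = (i + c*e) mod d"
  shows "compat d S s (concat (replicate n b))"
  using assms(3)
proof (induction n arbitrary: s c)
  case 0 then show ?case by (simp add: compat_def)
next
  case (Suc n)
  have "(s + e) mod d = (i + Suc c * e) mod d" using Suc.prems
    by (metis add.assoc mod_add_left_eq mult_Suc add.commute)
  then have "compat d S (s + e) (concat (replicate n b))" by (rule Suc.IH)
  then have "compat d S (s + length b) (concat (replicate n b))" using assms(2) by simp
  moreover have "compat d S s b" using assms(1) Suc.prems by blast
  ultimately show ?case by (simp add: compat_append)
qed

lemma core:
  assumes d: "0 < d" and dx: "d dvd length x"
    and f: "f 0 = q0" "f (length x) = q0" "\<forall>k<length x. (f k, x!k, f (Suc k)) \<in> trans A"
    and ij: "i < j" "j \<le> length x" "f i = f j"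
  shows "\<exists>x'. run A q0 x' q0 \<and> d dvd length x' \<and> (\<forall>r<d. Kset d x' r = Tset d (j-i) x r)"
proof -
  define e where "e = j - i"
  define y where "y = take i (drop 0 x)"
  define b where "b = take e (drop i x)"
  define y' where "y' = take (length x - j) (drop j x)"
  have h1: "y = take i x" by (simp add: y_def)
  have h2: "y' = drop j x" unfolding y'_def by simp
  have h3: "drop e (drop i x) = drop j x" using ij by (simp add: e_def)
  have "drop i x = b @ drop e (drop i x)" unfolding b_def by (rule append_take_drop_id[symmetric])
  then have "drop i x = b @ y'" using h2 h3 by metis
  then have hx: "x = y @ b @ y'" using h1 append_take_drop_id[of i x] by simp
  have ly: "length y = i" "length b = e" "length y' = length x - j"
    unfolding y_def b_def y'_def e_def using ij by auto
  have t1: "\<forall>k<length y. (f (0+k), y!k, f (Suc (0+k))) \<in> trans A"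
    using f(3) ly(1) ij unfolding h1 by auto
  have r1: "run A q0 y (f i)" using fun_run[OF t1] f(1) ly(1) by simp
  have t2: "\<forall>k<length b. (f (i+k), b!k, f (Suc (i+k))) \<in> trans A"
    using f(3) ly(2) ij unfolding b_def e_def by auto
  have r2: "run A (f i) b (f i)" using fun_run[OF t2] ly(2) ij unfolding e_def by simp
  have t3: "\<forall>k<length y'. (f (j+k), y'!k, f (Suc (j+k))) \<in> trans A"
    using f(3) ly(3) ij unfolding h2 by auto
  have r3: "run A (f i) y' q0" using fun_run[OF t3] ly(3) ij f(2) by simp
  define P where "P c = y @ concat (replicate c b) @ y'" for c
  have rP: "run A q0 (P c) q0" for c
    using r1 r2 r3 run_rep[OF r2, of c] unfolding P_def by (auto simp: run_append)
  have lP: "length (P (Suc c)) = length x + c*e" for c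
    using ly ij unfolding P_def e_def by (simp add: length_concat sum_list_replicate)
  define Q where "Q c = P (Suc c) @ x @ P (Suc (d - c))" for c
  have lQ: "length (Q c) = 3 * length x + d * e" if "c \<le> d" for c
  proof -
    have "c * e + (d - c) * e = d * e" using that by (metis add_mult_distrib le_add_diff_inverse)
    then show ?thesis using lP[of c] lP[of "d-c"] unfolding Q_def by simp
  qed
  have rx: "run A q0 x q0" using fun_run[of x f 0 A] f by simp
  have rQ: "run A q0 (Q c) q0" for c
    unfolding Q_def run_append using rP rx by blast
  define x' where "x' = concat (map Q [0..<d])"
  have rx': "run A q0 x' q0" unfolding x'_def by (rule run_concat) (use rQ in auto)
  have dQ: "d dvd length (Q c)" if "c < d" for c using lQ[of c] that dx by simp
  have dx': "d dvd length x'" unfolding x'_def by (rule concat_dvd) (use dQ in auto)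
  let ?S = "Tset d e x"
  have cP: "compat d ?S s (P (Suc n))" if "s mod d = (c*e) mod d" for s c n
  proof -
    have c1: "compat d ?S s y" unfolding y_def
      by (rule seg_compat[where c=c]) (use ij that in auto)
    have c2: "compat d ?S (s + i) (concat (replicate (Suc n) b))"
    proof (rule rep_compat[where c=c])
      show "\<forall>s. (\<exists>c. s mod d = (i + c * e) mod d) \<longrightarrow> compat d ?S s b"
        unfolding b_def using ij unfolding e_def by (auto intro!: seg_compat)
      show "length b = e" by (rule ly(2))
      show "(s + i) mod d = (i + c * e) mod d" using that by (metis add.commute mod_add_right_eq)
    qed
    have "(s + i + Suc n * e) mod d = (j + (c + n) * e) mod d"
    proof -
      have "(s + i + Suc n * e) mod d = (c*e + i + Suc n * e) mod d" using that by (metis mod_add_left_eq)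
      moreover have je: "j = i + e" using ij unfolding e_def by simp
      moreover have "c*e + i + Suc n * e = j + (c + n) * e" unfolding je by (simp add: algebra_simps)
      ultimately show ?thesis by (simp only:)
    qed
    then have c3: "compat d ?S (s + i + Suc n * e) y'" unfolding y'_def
      by (intro seg_compat) (use ij in auto)
    show ?thesis using c1 c2 c3 ly unfolding P_def
      by (simp add: compat_append length_concat sum_list_replicate add.assoc)
  qed
  have cQ: "compat d ?S 0 (Q c)" for c
  proof -
    have a1: "compat d ?S 0 (P (Suc c))" by (rule cP[where c=0]) simp
    have "(length x + c * e) mod d = (0 + c*e) mod d" using mod_dvd_add[OF dx] by simp
    then have a2: "compat d ?S (0 + length (P (Suc c))) x"
      using seg_compat[of 0 "length x" x "length x + c * e" d c e] lP by simp
    have "d dvd 2 * length x" using dx by simp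
    have "0 + length (P (Suc c)) + length x = 2 * length x + c * e" using lP by simp
    then have "(0 + length (P (Suc c)) + length x) mod d = (c*e) mod d" using mod_dvd_add[OF \<open>d dvd 2 * length x\<close>, of "c*e"] by (simp only:)
    then have a3: "compat d ?S (0 + length (P (Suc c)) + length x) (P (Suc (d - c)))" by (rule cP)
    show ?thesis using a1 a2 a3 unfolding Q_def by (simp add: compat_append)
  qed
  have cx': "compat d ?S 0 x'" unfolding x'_def
    by (rule compat_concat) (use cQ dQ in auto)
  have "Kset d x' r = ?S r" if r: "r < d" for r
  proof
    show "Kset d x' r \<subseteq> ?S r"
    proof
      fix a assume "a \<in> Kset d x' r"
      then obtain p where p: "p < length x'" "x'!p = a" "p mod d = r" unfolding Kset_def by auto
      then show "a \<in> ?S r" using cx' unfolding compat_def by auto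
    qed
    show "?S r \<subseteq> Kset d x' r"
    proof
      fix a assume "a \<in> ?S r"
      then obtain q c where qc: "q < length x" "x!q = a" "(q + c*e) mod d = r mod d" unfolding Tset_def by auto
      define c1 where "c1 = c mod d"
      have c1d: "c1 < d" unfolding c1_def using d by simp
      have "(c1 * e) mod d = (c * e) mod d" unfolding c1_def by (simp add: mod_mult_left_eq)
      have "(length x + c1 * e + q) mod d = (c1 * e + q) mod d"
        using mod_dvd_add[OF dx, of "c1 * e + q"] by (simp add: add.assoc)
      also have "\<dots> = ((c1 * e) mod d + q) mod d" by (simp add: mod_add_left_eq)
      also have "\<dots> = ((c * e) mod d + q) mod d" using \<open>(c1 * e) mod d = (c * e) mod d\<close> by simp
      also have "\<dots> = (q + c * e) mod d" by (metis mod_add_left_eq add.commute)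
      also have "\<dots> = r" using qc(3) r by simp
      finally have m: "(length x + c1 * e + q) mod d = r" .
      have "Q c1 ! (length (P (Suc c1)) + q) = a" unfolding Q_def using qc by (simp add: nth_append)
      moreover have "length (P (Suc c1)) + q < length (Q c1)" unfolding Q_def using qc by simp
      ultimately have "a \<in> Kset d (Q c1) r" unfolding Kset_def using m lP by force
      then show "a \<in> Kset d x' r" unfolding x'_def
        by (rule Kset_concat[rotated 2]) (use c1d dQ in auto)
    qed
  qed
  then show ?thesis using rx' dx' unfolding e_def by blast
qed




lemma compat_mono: "0 < d \<Longrightarrow> \<forall>r<d. S r \<subseteq> S' r \<Longrightarrow> compat d S s u \<Longrightarrow> compat d S' s u"
  unfolding compat_def by (meson mod_less_divisor subsetD)

lemma compat_self: "compat d (Kset d x) 0 x"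
  unfolding compat_def Kset_def by auto

lemma ideal_down:
  assumes "0 < d" "d dvd length w"
  shows "ideal_d d (down_d d (star_word w))"
  unfolding ideal_d_def
proof (intro conjI allI impI ballI)
  have "[] \<in> down_d d (star_word w)" unfolding down_d_def star_word_def subword_emb
    by (auto intro!: exI[of _ 0] emb_Nil)
  then show "down_d d (star_word w) \<noteq> {}" by blast
next
  fix u v assume v: "v \<in> down_d d (star_word w)" and "subword_d d u v"
  then have e: "emb d u v" by (simp add: subword_emb)
  note P = emb_props[OF e]
  have A: "d dvd length v \<and> compat d (Kset d w) 0 v" by (rule downA1[OF assms(2) v])
  have "d dvd length u" using A P by (metis mod_0_imp_dvd dvd_imp_mod_0)
  moreover have "compat d (Kset d w) 0 u" unfolding compat_def
  proof (intro allI impI)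
    fix p assume "p < length u"
    then obtain q where "q<length v" "v!q = u!p" "q mod d = p mod d" using P by blast
    then show "u ! p \<in> Kset d w ((0 + p) mod d)" using A unfolding compat_def by force
  qed
  ultimately show "u \<in> down_d d (star_word w)" by (intro downA2 assms)
next
  fix x y assume x: "x \<in> down_d d (star_word w)" and y: "y \<in> down_d d (star_word w)"
  note X = downA1[OF assms(2) x] and Y = downA1[OF assms(2) y]
  have "compat d (Kset d w) 0 (x @ y)"
  proof -
    have "compat d (Kset d w) (0 + length x) y"
      using compat_cong[of "length x" d 0 "Kset d w" y] X Y by (simp add: dvd_imp_mod_0)
    then show ?thesis using X by (simp add: compat_append)
  qed
  then have "x @ y \<in> down_d d (star_word w)" using X Y assms by (intro downA2) auto
  moreover have "subword_d d x (x @ y)" unfolding subword_emb using Y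
    by (intro emb_append_right emb_refl) auto
  moreover have "subword_d d y (x @ y)" unfolding subword_emb using X
    by (intro emb_del emb_refl) auto
  ultimately show "\<exists>z\<in>down_d d (star_word w). subword_d d x z \<and> subword_d d y z" by blast
qed

lemma adh:
  assumes "0 < d" "d dvd length w" "d dvd length x" "run A q0 x q0"
    "lang A = {w. run A q0 w q0}" "\<forall>r<d. Kset d x r = Kset d w r"
  shows "down_d d (star_word w) \<in> Adh_d d (lang A)"
  unfolding Adh_d_def
proof (intro CollectI conjI subsetI)
  show "ideal_d d (down_d d (star_word w))" by (rule ideal_down[OF assms(1,2)])
next
  fix u assume u: "u \<in> down_d d (star_word w)"
  note U = downA1[OF assms(2) u]
  have wx: "\<forall>r<d. Kset d w r \<subseteq> Kset d x r" using assms(6) by simp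
  have "compat d (Kset d x) 0 u" using compat_mono[OF assms(1) wx] U by blast
  then have "u \<in> down_d d (star_word x)" using downA2[OF assms(1,3)] U by blast
  then obtain n where n: "subword_d d u (concat (replicate n x))"
    unfolding down_d_def star_word_def by blast
  define V where "V = concat (replicate n x)"
  have "run A q0 V q0" unfolding V_def by (rule run_rep[OF assms(4)])
  then have "V \<in> lang A" using assms(5) by simp
  moreover have "V \<in> down_d d (star_word w)"
  proof -
    have dV: "d dvd length V" unfolding V_def using assms(3) by (simp add: length_concat sum_list_replicate)
    have "V \<in> down_d d (star_word x)" unfolding down_d_def star_word_def subword_emb V_def
      by (auto intro!: emb_refl)
    then have "compat d (Kset d x) 0 V" using downA1[OF assms(3)] by blast
    moreover have "\<forall>r<d. Kset d x r \<subseteq> Kset d w r" using assms(6) by simp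
    ultimately have "compat d (Kset d w) 0 V" using compat_mono[OF assms(1)] by blast
    then show ?thesis using dV downA2[OF assms(1,2)] by blast
  qed
  ultimately have "V \<in> lang A \<inter> down_d d (star_word w)" by blast
  then show "u \<in> down_d d (lang A \<inter> down_d d (star_word w))"
    using n unfolding V_def[symmetric] down_d_def[of d "lang A \<inter> down_d d (star_word w)"] by blast
qed

lemma Tset_cong:
  assumes "0 < d" "\<forall>r<d. Kset d x r = Kset d x' r"
  shows "Tset d e x r = Tset d e x' r"
proof -
  have *: "Tset d e x r \<subseteq> Tset d e x' r" if "0 < d" "\<forall>r<d. Kset d x r = Kset d x' r" for x x' :: "'a list"
  proof
    fix a assume "a \<in> Tset d e x r"
    then obtain q c where qc: "q < length x" "x!q = a" "(q + c*e) mod d = r mod d" unfolding Tset_def by auto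
    then have "a \<in> Kset d x (q mod d)" unfolding Kset_def by auto
    then have "a \<in> Kset d x' (q mod d)" using that by simp
    then obtain q' where q': "q' < length x'" "x'!q' = a" "q' mod d = q mod d" unfolding Kset_def by auto
    have "(q' + c*e) mod d = r mod d" using qc(3) q'(3) by (metis mod_add_left_eq)
    then show "a \<in> Tset d e x' r" unfolding Tset_def using q' by auto
  qed
  have "Tset d e x r \<subseteq> Tset d e x' r" by (rule *[OF assms])
  moreover have "Tset d e x' r \<subseteq> Tset d e x r" by (rule *) (use assms in auto)
  ultimately show ?thesis by (rule subset_antisym)
qed

lemma kappa_K: "0 < d \<Longrightarrow> 1 \<le> i \<Longrightarrow> kappa_d d w i = Kset d w ((i - 1) mod d)"
proof -
  assume d: "0 < d" and i: "1 \<le> i"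
  then obtain i' where i': "i = Suc i'" by (cases i) auto
  have eq: "(Suc p' mod d = i mod d) \<longleftrightarrow> (p' mod d = (i - 1) mod d)" for p'
  proof
    assume h: "Suc p' mod d = i mod d"
    have "Suc p' mod d = Suc i' mod d" by (simp only: h i')
    then have "p' mod d = i' mod d" by (rule Suc_mod_cancel)
    moreover have "i - 1 = i'" using i' by simp
    ultimately show "p' mod d = (i - 1) mod d" by simp
  next
    assume h: "p' mod d = (i - 1) mod d"
    have "i - 1 = i'" using i' by simp
    then have "p' mod d = i' mod d" using h by simp
    then have "Suc p' mod d = Suc i' mod d" by (metis mod_Suc_eq)
    then show "Suc p' mod d = i mod d" by (simp only: i')
  qed
  show ?thesis unfolding kappa_d_def Kset_def
  proof (intro set_eqI iffI)
    fix a assume "a \<in> {w ! (p - 1) |p. 1 \<le> p \<and> p \<le> length w \<and> p mod d = i mod d}"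
    then obtain p where p: "1 \<le> p" "p \<le> length w" "p mod d = i mod d" "a = w ! (p - 1)" by auto
    then obtain p' where pp: "p = Suc p'" by (cases p) auto
    have 1: "p' mod d = (i - 1) mod d" using eq[of p'] p(3) pp by blast
    have 2: "p' < length w" "a = w ! p'" using p pp by auto
    show "a \<in> {w ! p |p. p < length w \<and> p mod d = (i - 1) mod d}" using 1 2 by blast
  next
    fix a assume "a \<in> {w ! p |p. p < length w \<and> p mod d = (i - 1) mod d}"
    then obtain p where p: "p < length w" "p mod d = (i - 1) mod d" "a = w ! p" by auto
    have 1: "Suc p mod d = i mod d" using eq[of p] p(2) by blast
    have 2: "a = w ! (Suc p - 1)" "1 \<le> Suc p" "Suc p \<le> length w" using p by auto
    show "a \<in> {w ! (p - 1) |p. 1 \<le> p \<and> p \<le> length w \<and> p mod d = i mod d}"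
      using 1 2 by blast
  qed
qed




lemma m_pos:
  assumes "wf_nfa A" "cyclic A" "card (states A) \<le> m"
  shows "1 \<le> m"
proof -
  have "card (init A) = 1" using assms(2) unfolding cyclic_def by simp
  moreover have "card (init A) \<le> card (states A)"
    using assms(1) unfolding wf_nfa_def by (intro card_mono) auto
  ultimately show ?thesis using assms(3) by simp
qed

lemma pi_nil: "0 < d \<Longrightarrow> pi_d d [] \<le> 1"
  unfolding pi_d_def by (rule Least_le) (simp add: kappa_d_def)

lemma witness:
  assumes d: "0 < d" and dv: "d dvd length v"
    and L: "lang A = {w. run A q0 w q0}"
    and adh: "down_d d (star_word v) \<in> Adh_d d (lang A)"
  shows "\<exists>x. run A q0 x q0 \<and> d dvd length x \<and> length v \<le> length x \<and> (\<forall>r<d. Kset d x r = Kset d v r)"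
proof -
  have "v \<in> down_d d (star_word v)" unfolding down_d_def star_word_def subword_emb
    by (auto intro!: exI[of _ "concat (replicate 1 v)"] exI[of _ 1] emb_refl)
  then have "v \<in> down_d d (lang A \<inter> down_d d (star_word v))" using adh unfolding Adh_d_def by blast
  then obtain x where x: "x \<in> lang A" "x \<in> down_d d (star_word v)" "subword_d d v x"
    unfolding down_d_def[of d "lang A \<inter> down_d d (star_word v)"] by blast
  note X = downA1[OF dv x(2)]
  have e: "emb d v x" using x(3) by (simp add: subword_emb)
  note P = emb_props[OF e]
  have "Kset d x r = Kset d v r" if r: "r < d" for r
  proof
    show "Kset d x r \<subseteq> Kset d v r"
    proof
      fix a assume "a \<in> Kset d x r"
      then obtain p where p: "p < length x" "x!p = a" "p mod d = r" unfolding Kset_def by blast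
      then show "a \<in> Kset d v r" using X unfolding compat_def by force
    qed
    show "Kset d v r \<subseteq> Kset d x r"
    proof
      fix a assume "a \<in> Kset d v r"
      then obtain p where p: "p < length v" "v!p = a" "p mod d = r" unfolding Kset_def by blast
      then obtain q where "q < length x" "x!q = v!p" "q mod d = p mod d" using P by blast
      then show "a \<in> Kset d x r" unfolding Kset_def using p by auto
    qed
  qed
  then show ?thesis using x(1) L X P by auto
qed

theorem mainTheorem14:
  fixes A1 :: "('q1, 'a::finite) nfa" and A2 :: "('q2, 'a) nfa"
    and m d :: nat and v :: "'a list"
  assumes "wf_nfa A1" "wf_nfa A2"
    and "cyclic A1" "cyclic A2"
    and "card (states A1) \<le> m" "card (states A2) \<le> m"
    and "0 < d" "fact (m^2) dvd d"
    and "d dvd length v"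
    and "down_d d (star_word v) \<in> Adh_d d (lang A1)"
    and "down_d d (star_word v) \<in> Adh_d d (lang A2)"
  shows "\<exists>w. d dvd length w
    \<and> down_d d (star_word v) \<subseteq> down_d d (star_word w)
    \<and> down_d d (star_word w) \<in> Adh_d d (lang A1)
    \<and> down_d d (star_word w) \<in> Adh_d d (lang A2)
    \<and> pi_d d w \<le> m^2"
proof (cases "v = []")
  case True
  have "1 \<le> m" by (rule m_pos[OF assms(1,3,5)])
  then have "1 \<le> m^2" by simp
  moreover have "pi_d d v \<le> 1" using pi_nil[OF assms(7)] True by simp
  ultimately show ?thesis using assms by (intro exI[of _ v]) auto
next
  case False
  note d = assms(7)
  have m1: "1 \<le> m" by (rule m_pos[OF assms(1,3,5)])
  have "fact (m^2) \<le> d" using assms(7,8) by (simp add: dvd_imp_le)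
  moreover have "m^2 \<le> fact (m^2)" by (rule fact_ge_self)
  ultimately have md: "m^2 \<le> d" by linarith
  have "d \<le> length v" using assms(9) False by (simp add: dvd_imp_le)
  obtain q1 where Q1: "init A1 = {q1}" "lang A1 = {w. run A1 q1 w q1}" by (rule cyclic_lang[OF assms(3)])
  obtain q2 where Q2: "init A2 = {q2}" "lang A2 = {w. run A2 q2 w q2}" by (rule cyclic_lang[OF assms(4)])
  obtain x1 where x1: "run A1 q1 x1 q1" "d dvd length x1" "length v \<le> length x1" "\<forall>r<d. Kset d x1 r = Kset d v r"
    using witness[OF d assms(9) Q1(2) assms(10)] by blast
  obtain x2 where x2: "run A2 q2 x2 q2" "d dvd length x2" "length v \<le> length x2" "\<forall>r<d. Kset d x2 r = Kset d v r"
    using witness[OF d assms(9) Q2(2) assms(11)] by blast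
  obtain f1 where f1: "f1 0 = q1" "f1 (length x1) = q1" "\<forall>k<length x1. (f1 k, x1!k, f1 (Suc k)) \<in> trans A1"
    using run_fun[OF x1(1)] by blast
  obtain f2 where f2: "f2 0 = q2" "f2 (length x2) = q2" "\<forall>k<length x2. (f2 k, x2!k, f2 (Suc k)) \<in> trans A2"
    using run_fun[OF x2(1)] by blast
  have l1: "m^2 \<le> length x1" and l2: "m^2 \<le> length x2" using md \<open>d \<le> length v\<close> x1(3) x2(3) by linarith+
  have q1s: "q1 \<in> states A1" using Q1(1) assms(1) unfolding wf_nfa_def by auto
  have q2s: "q2 \<in> states A2" using Q2(1) assms(2) unfolding wf_nfa_def by auto
  have "\<forall>k\<le>m^2. f1 k \<in> states A1 \<and> f2 k \<in> states A2"
  proof (intro allI impI conjI)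
    fix k assume "k \<le> m^2"
    then show "f1 k \<in> states A1" using fun_states[OF assms(1) q1s f1(3) f1(1)] l1 by simp
    show "f2 k \<in> states A2" using fun_states[OF assms(2) q2s f2(3) f2(1)] l2 \<open>k \<le> m^2\<close> by simp
  qed
  moreover have "finite (states A1)" "finite (states A2)" using assms(1,2) unfolding wf_nfa_def by auto
  ultimately obtain i j where ij: "i < j" "j \<le> m^2" "f1 i = f1 j" "f2 i = f2 j"
    using pigeon[of "states A1" "states A2" m f1 f2] assms(5,6) by blast
  define e where "e = j - i"
  obtain x1' where x1': "run A1 q1 x1' q1" "d dvd length x1'" "\<forall>r<d. Kset d x1' r = Tset d e x1 r"
    using core[OF d x1(2) f1(1,2,3) ij(1) _ ij(3)] ij l1 unfolding e_def by auto
  obtain x2' where x2': "run A2 q2 x2' q2" "d dvd length x2'" "\<forall>r<d. Kset d x2' r = Tset d e x2 r"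
    using core[OF d x2(2) f2(1,2,3) ij(1) _ ij(4)] ij l2 unfolding e_def by auto
  have T12: "Tset d e x1 r = Tset d e x2 r" for r
  proof -
    have "\<forall>r<d. Kset d x1 r = Kset d x2 r" using x1(4) x2(4) by simp
    then show ?thesis by (rule Tset_cong[OF d])
  qed
  define w where "w = x1'"
  have Kw: "\<forall>r<d. Kset d w r = Tset d e x1 r" using x1' unfolding w_def by simp
  have "d dvd length w" using x1' unfolding w_def by simp
  moreover have "down_d d (star_word v) \<subseteq> down_d d (star_word w)"
  proof
    fix u assume u: "u \<in> down_d d (star_word v)"
    note U = downA1[OF assms(9) u]
    have vw: "\<forall>r<d. Kset d v r \<subseteq> Kset d w r"
    proof (intro allI impI subsetI)
      fix r a assume r: "r < d" and a: "a \<in> Kset d v r"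
      then have "a \<in> Kset d x1 r" using x1(4) by simp
      then obtain q where q: "q < length x1" "x1!q = a" "q mod d = r" unfolding Kset_def by blast
      then have "(q + 0*e) mod d = r mod d" using r by simp
      then have "a \<in> Tset d e x1 r" unfolding Tset_def using q by blast
      then show "a \<in> Kset d w r" using Kw r by simp
    qed
    have "compat d (Kset d w) 0 u" using compat_mono[OF d vw] U by blast
    then show "u \<in> down_d d (star_word w)" using downA2[OF d \<open>d dvd length w\<close>] U by blast
  qed
  moreover have "down_d d (star_word w) \<in> Adh_d d (lang A1)"
    by (rule adh[OF d \<open>d dvd length w\<close> x1'(2) x1'(1) Q1(2)]) (simp add: w_def)
  moreover have "down_d d (star_word w) \<in> Adh_d d (lang A2)"
  proof (rule adh[OF d \<open>d dvd length w\<close> x2'(2) x2'(1) Q2(2)])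
    show "\<forall>r<d. Kset d x2' r = Kset d w r" using x2'(3) Kw T12 by simp
  qed
  moreover have "pi_d d w \<le> m^2"
  proof -
    have e1: "1 \<le> e" "e \<le> m^2" using ij unfolding e_def by auto
    have "e dvd fact (m^2)" using e1 by (simp add: dvd_fact)
    then have ed: "e dvd d" using assms(8) by (rule dvd_trans)
    have "\<forall>i'\<in>{1..d - e}. kappa_d d w (i' + e) = kappa_d d w i'"
    proof
      fix i' assume "i' \<in> {1..d - e}"
      then have i1: "1 \<le> i'" by simp
      have "kappa_d d w (i' + e) = Kset d w ((i' + e - 1) mod d)" by (rule kappa_K[OF d]) (use i1 in simp)
      also have "\<dots> = Tset d e x1 ((i' + e - 1) mod d)" using Kw d by simp
      also have "\<dots> = Tset d e x1 ((i' - 1) + e)" using i1 Tset_mod by (metis Nat.add_diff_assoc2)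
      also have "\<dots> = Tset d e x1 (i' - 1)" by (rule Tset_shift[OF d])
      also have "\<dots> = Tset d e x1 ((i' - 1) mod d)" by (rule Tset_mod[symmetric])
      also have "\<dots> = Kset d w ((i' - 1) mod d)" using Kw d by simp
      also have "\<dots> = kappa_d d w i'" using kappa_K[OF d i1, of w] by simp
      finally show "kappa_d d w (i' + e) = kappa_d d w i'" .
    qed
    then have "1 \<le> e \<and> e \<le> d \<and> e dvd d \<and> (\<forall>i\<in>{1..d - e}. kappa_d d w (i + e) = kappa_d d w i)"
      using e1 md ed by auto
    then have "pi_d d w \<le> e" unfolding pi_d_def by (rule Least_le)
    then show ?thesis using e1 by simp
  qed
  ultimately show ?thesis by blast
qed


end
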